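(* Let $\beta>1$ and $C_\beta=2+\frac{2(\beta-1)^2}{2\beta-1}$. For all $x,y\in\mathbb{R}$, $$2\big(x|x|^{\beta-1}-y|y|^{\beta-1}\big)^2-C_\beta(x-y)\big(x|x|^{2(\beta-1)}-y|y|^{2(\beta-1)}\big)\le0.$$ *)

theory Defs
  imports Complex_Main
begin

end

theory Submission
  imports Defs
begin

lemma dphi:
  fixes a t :: real
  assumes a: "a > 0"
  shows "((\<lambda>t. t * \<bar>t\<bar> powr a) has_real_derivative (a + 1) * \<bar>t\<bar> powr a) (at t)"
proof (cases "t = 0")
  case True
  have lim: "((\<lambda>h. \<bar>h\<bar> powr a) \<longlongrightarrow> 0) (at (0::real))"
    by (rule tendsto_zero_powrI) (auto intro!: tendsto_eq_intros a)
  have "((\<lambda>y. (y * \<bar>y\<bar> powr a - 0 * \<bar>0\<bar> powr a) / (y - 0)) \<longlongrightarrow> 0) (at (0::real))"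
    by (rule Lim_transform_within[OF lim zero_less_one]) auto
  then show ?thesis using True a
    by (simp add: has_field_derivative_iff)
next
  case False
  show ?thesis
  proof (cases "t > 0")
    case True
    have "((\<lambda>t. t powr (a + 1)) has_real_derivative (a + 1) * t powr (a + 1 - 1)) (at t)"
      using True by (rule has_real_derivative_powr)
    then have d: "((\<lambda>t. t powr (a + 1)) has_real_derivative (a + 1) * \<bar>t\<bar> powr a) (at t)"
      using True by simp
    show ?thesis
    proof (rule has_field_derivative_transform_within_open[OF d, of "{0<..}"])
      fix x :: real assume "x \<in> {0<..}"
      then show "x powr (a + 1) = x * \<bar>x\<bar> powr a"
        by (simp add: powr_add)
    qed (use True in auto)
  next
    case neg: False
    with False have tn: "t < 0" by simp
    have "((\<lambda>t. t powr (a + 1)) has_real_derivative (a + 1) * (-t) powr (a + 1 - 1)) (at (-t))"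
      using tn by (intro has_real_derivative_powr) simp
    then have "((\<lambda>t. (-t) powr (a + 1)) has_real_derivative (a + 1) * (-t) powr (a + 1 - 1) * (-1)) (at t)"
      by (rule DERIV_chain2) (auto intro!: derivative_eq_intros)
    then have "((\<lambda>t. - ((-t) powr (a + 1))) has_real_derivative - ((a + 1) * (-t) powr (a + 1 - 1) * (-1))) (at t)"
      by (rule DERIV_minus)
    then have d: "((\<lambda>t. - ((-t) powr (a + 1))) has_real_derivative (a + 1) * \<bar>t\<bar> powr a) (at t)"
      using tn by simp
    show ?thesis
    proof (rule has_field_derivative_transform_within_open[OF d, of "{..<0}"])
      fix x :: real assume "x \<in> {..<0}"
      then show "- ((-x) powr (a + 1)) = x * \<bar>x\<bar> powr a"
        by (simp add: powr_add)
    qed (use tn in auto)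
  qed
qed

lemma cs_aux:
  fixes F G f :: "real \<Rightarrow> real"
  assumes dF: "\<And>t. (F has_real_derivative f t) (at t)"
    and dG: "\<And>t. (G has_real_derivative (f t)^2) (at t)"
    and yx: "y \<le> x"
  shows "(F x - F y)^2 \<le> (x - y) * (G x - G y)"
proof -
  have K: "0 \<le> G v - G u + (v - u) * (f v)^2 - 2 * f v * (F v - F u)" if uv: "u \<le> v" for u v
  proof -
    let ?K = "\<lambda>u. G v - G u + (v - u) * (f v)^2 - 2 * f v * (F v - F u)"
    define k where "k = (\<lambda>w. 2 * f v * f w - (f w)^2 - (f v)^2)"
    have "?K v \<le> ?K u"
    proof (rule deriv_nonpos_imp_antimono[where g = ?K and g' = k])
      fix w assume "w \<in> {u..v}"
      show "(?K has_real_derivative k w) (at w)"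
        unfolding k_def by (auto intro!: derivative_eq_intros dF dG simp: algebra_simps)
      have "0 \<le> (f v - f w)^2" by simp
      then show "k w \<le> 0" unfolding k_def
        by (simp add: power2_eq_square algebra_simps)
    qed (rule uv)
    then show ?thesis by simp
  qed
  let ?H = "\<lambda>v. (v - y) * (G v - G y) - (F v - F y)^2"
  have "?H y \<le> ?H x"
  proof (rule deriv_nonneg_imp_mono[where g = ?H and g' = "\<lambda>v. (G v - G y) + (v - y) * (f v)^2 - 2 * (F v - F y) * f v"])
    fix w assume w: "w \<in> {y..x}"
    show "(?H has_real_derivative (G w - G y) + (w - y) * (f w)^2 - 2 * (F w - F y) * f w) (at w)"
      by (auto intro!: derivative_eq_intros dF dG simp: power2_eq_square algebra_simps)
    show "0 \<le> (G w - G y) + (w - y) * (f w)^2 - 2 * (F w - F y) * f w"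
      using K[of y w] w by (simp add: algebra_simps)
  qed (rule yx)
  then show ?thesis by simp
qed

theorem lemmaB3:
  fixes \<beta> x y :: real
  assumes "\<beta> > 1"
  shows "2 * (x * \<bar>x\<bar> powr (\<beta> - 1) - y * \<bar>y\<bar> powr (\<beta> - 1))^2
         - (2 + 2 * (\<beta> - 1)^2 / (2 * \<beta> - 1)) * (x - y)
           * (x * \<bar>x\<bar> powr (2 * (\<beta> - 1)) - y * \<bar>y\<bar> powr (2 * (\<beta> - 1))) \<le> 0"
proof -
  define a where "a = \<beta> - 1"
  have a: "a > 0" using assms a_def by simp
  define F where "F = (\<lambda>t::real. t * \<bar>t\<bar> powr a / \<beta>)"
  define G where "G = (\<lambda>t::real. t * \<bar>t\<bar> powr (2 * a) / (2 * \<beta> - 1))"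
  define f where "f = (\<lambda>t::real. \<bar>t\<bar> powr a)"
  have b: "\<beta> > 0" "2 * \<beta> - 1 > 0" using assms by auto
  have dF: "(F has_real_derivative f t) (at t)" for t
  proof -
    have "((\<lambda>t. t * \<bar>t\<bar> powr a / \<beta>) has_real_derivative (a + 1) * \<bar>t\<bar> powr a / \<beta>) (at t)"
      by (intro DERIV_cdivide dphi a)
    then show ?thesis using b unfolding F_def f_def a_def by simp
  qed
  have dG: "(G has_real_derivative (f t)^2) (at t)" for t
  proof -
    have "((\<lambda>t. t * \<bar>t\<bar> powr (2 * a) / (2 * \<beta> - 1)) has_real_derivative (2 * a + 1) * \<bar>t\<bar> powr (2 * a) / (2 * \<beta> - 1)) (at t)"
      using a by (intro DERIV_cdivide dphi) simp
    moreover have "(\<bar>t\<bar> powr a)^2 = \<bar>t\<bar> powr (2 * a)"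
      by (simp add: powr_powr[symmetric] powr_realpow[symmetric] mult.commute)
    ultimately show ?thesis using b unfolding G_def f_def a_def by simp
  qed
  have cs: "(F x - F y)^2 \<le> (x - y) * (G x - G y)"
  proof (cases "y \<le> x")
    case True
    then show ?thesis by (rule cs_aux[OF dF dG])
  next
    case False
    then have "(F y - F x)^2 \<le> (y - x) * (G y - G x)" by (intro cs_aux[OF dF dG]) simp
    then show ?thesis by (simp add: power2_commute algebra_simps)
  qed
  have C: "2 + 2 * (\<beta> - 1)^2 / (2 * \<beta> - 1) = 2 * \<beta>^2 / (2 * \<beta> - 1)"
    using b by (simp add: field_simps power2_eq_square)
  have e1: "x * \<bar>x\<bar> powr (\<beta> - 1) - y * \<bar>y\<bar> powr (\<beta> - 1) = \<beta> * (F x - F y)"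
    using b unfolding F_def a_def by (simp add: field_simps)
  have e2: "x * \<bar>x\<bar> powr (2 * (\<beta> - 1)) - y * \<bar>y\<bar> powr (2 * (\<beta> - 1)) = (2 * \<beta> - 1) * (G x - G y)"
    using b unfolding G_def a_def by (simp add: diff_divide_distrib[symmetric])
  have "2 * (\<beta> * (F x - F y))^2 - 2 * \<beta>^2 / (2 * \<beta> - 1) * (x - y) * ((2 * \<beta> - 1) * (G x - G y))
      = 2 * \<beta>^2 * ((F x - F y)^2 - (x - y) * (G x - G y))"
    using b by (simp add: field_simps power2_eq_square)
  also have "\<dots> \<le> 0" using cs by (simp add: mult_nonneg_nonpos)
  finally show ?thesis unfolding C e1 e2 .
qed

end
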